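(* Let $\mathcal{M}_\Sigma$ be a trace monoid, let $S,T\subseteq\Sigma$ and $p\in(0,p_S)$. Consider the following recursive randomized procedure $\mathrm{A}_1(p,S,T)$: if $S\cap T=\emptyset$, return $\mathbf{e}$; otherwise choose $a_1\in S\cap T$, set $r=1-\mu_S(p)/\mu_{S\setminus\{a_1\}}(p)$, draw an integer $K$ with $\mathbb{P}(K=k)=(1-r)r^k$ ($k\geqslant0$), set $\xi=\mathbf{e}$, then for $i=0,\dots,K-1$ compute $v_i=\mathrm{A}_1(p,S\setminus\{a_1\},\mathscr{L}(a_1))$ (independently) and set $\xi\gets\xi\cdot v_i\cdot a_1$; finally compute $v_K=\mathrm{A}_1(p,S\setminus\{a_1\},T)$, set $\xi\gets\xi\cdot v_K$ and return $\xi$. Then the output $\xi\in\mathcal{M}_S$ has law $D^{p}_{S,T}$, i.e. $B_{S,p}(\,\cdot\mid\max(\xi)\subseteq T)$. Moreover, assume all real numbers $\mu_X(p)$ ($X\subseteq\Sigma$) are precomputed; that choosing an element of the intersection of two subsets of $\Sigma$, a function call, a variable assignment and a multiplication in $\mathcal{M}_\Sigma$ each take a constant number of steps; and that drawing a random integer with value $X$ takes at most a constant times $X+1$ steps. Then there is a constant $C$ (depending only on these cost constants) such that every execution of $\mathrm{A}_1(p,S,T)$ outputting $\xi$ takes at most $C(|\Sigma|+1)(|\xi|+1)$ steps, i.e. $\mathcal{O}(|\Sigma|(|\xi|+1))$ steps.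
   Context: Let $\Sigma$ be a finite alphabet and $\mathcal{R}$ a reflexive and symmetric binary relation on $\Sigma$. The trace monoid $\mathcal{M}_\Sigma$ is the quotient of $\Sigma^*$ by the congruence generated by $ab=ba$ for all $(a,b)\notin\mathcal{R}$; unit $\mathbf{e}$. For $\Sigma'\subseteq\Sigma$, $\mathcal{M}_{\Sigma'}$ is the submonoid generated by $\Sigma'$. $|x|$ is the length of $x$; $\max(x)$ is the set of letters $a$ with $x=y\cdot a$ for some trace $y$. $\mathscr{L}(a)=\{b\in\Sigma:(a,b)\in\mathcal{R}\}$. For $S\subseteq\Sigma$, a clique of $S$ is a subset of $S$ of pairwise non-$\mathcal{R}$-related letters (empty set included); $\mu_S(X)=\sum_{\gamma\text{ clique of }S}(-1)^{|\gamma|}X^{|\gamma|}$, $\mu_\emptyset=1$. For $S\neq\emptyset$, $p_S$ is the unique root of smallest modulus of $\mu_S$ (real, $0<p_S\leqslant1$); $p_\emptyset=+\infty$; $p_S\leqslant p_{S'}$ when $S'\subseteq S$. For $p\in(0,p_S)$, $\sum_{x\in\mathcal{M}_S}p^{|x|}=1/\mu_S(p)<\infty$ and $B_{S,p}$ is the probability distribution on $\mathcal{M}_S$ with $B_{S,p}(\{x\})=\mu_S(p)p^{|x|}$. $D^{p}_{S,T}=B_{S,p}(\,\cdot\mid\max(\xi)\subseteq T)$. *)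

theory Defs
  imports "HOL-Probability.Probability"
begin

definition swap1 :: "('a \<Rightarrow> 'a \<Rightarrow> bool) \<Rightarrow> 'a list \<Rightarrow> 'a list \<Rightarrow> bool" where
  "swap1 R u v \<longleftrightarrow> (\<exists>x y a b. u = x @ [a, b] @ y \<and> v = x @ [b, a] @ y \<and> \<not> R a b)"

definition tr :: "('a \<Rightarrow> 'a \<Rightarrow> bool) \<Rightarrow> 'a list \<Rightarrow> 'a list set" where
  "tr R w = {v. equivclp (swap1 R) w v}"

definition traces :: "('a \<Rightarrow> 'a \<Rightarrow> bool) \<Rightarrow> 'a set \<Rightarrow> 'a list set set" where
  "traces R S = tr R ` lists S"

definition tunit :: "('a \<Rightarrow> 'a \<Rightarrow> bool) \<Rightarrow> 'a list set" where
  "tunit R = tr R []"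

definition tmult :: "('a \<Rightarrow> 'a \<Rightarrow> bool) \<Rightarrow> 'a list set \<Rightarrow> 'a list set \<Rightarrow> 'a list set" where
  "tmult R x y = (\<Union>u\<in>x. \<Union>v\<in>y. tr R (u @ v))"

definition tlen :: "'a list set \<Rightarrow> nat" where
  "tlen x = length (SOME w. w \<in> x)"

definition tmax :: "('a \<Rightarrow> 'a \<Rightarrow> bool) \<Rightarrow> 'a list set \<Rightarrow> 'a set" where
  "tmax R x = {a. \<exists>y \<in> range (tr R). x = tmult R y (tr R [a])}"

definition Lset :: "'a set \<Rightarrow> ('a \<Rightarrow> 'a \<Rightarrow> bool) \<Rightarrow> 'a \<Rightarrow> 'a set" where
  "Lset \<Sigma> R a = {b \<in> \<Sigma>. R a b}"

definition is_clique :: "('a \<Rightarrow> 'a \<Rightarrow> bool) \<Rightarrow> 'a set \<Rightarrow> 'a set \<Rightarrow> bool" where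
  "is_clique R S \<gamma> \<longleftrightarrow> \<gamma> \<subseteq> S \<and> (\<forall>a\<in>\<gamma>. \<forall>b\<in>\<gamma>. a \<noteq> b \<longrightarrow> \<not> R a b)"

definition mu :: "('a \<Rightarrow> 'a \<Rightarrow> bool) \<Rightarrow> 'a set \<Rightarrow> 'b::comm_ring_1 \<Rightarrow> 'b" where
  "mu R S X = (\<Sum>\<gamma> \<in> {\<gamma>. is_clique R S \<gamma>}. (-1) ^ card \<gamma> * X ^ card \<gamma>)"

text \<open>p_S: modulus of a (complex) root of smallest modulus of mu_S; +infinity if no roots
  (in particular p_{empty} = +infinity).\<close>
definition pS :: "('a \<Rightarrow> 'a \<Rightarrow> bool) \<Rightarrow> 'a set \<Rightarrow> ereal" where
  "pS R S = Inf ((\<lambda>z. ereal (cmod z)) ` {z::complex. mu R S z = 0})"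

definition Bw :: "('a \<Rightarrow> 'a \<Rightarrow> bool) \<Rightarrow> 'a set \<Rightarrow> real \<Rightarrow> 'a list set \<Rightarrow> real" where
  "Bw R S p x = mu R S p * p ^ tlen x"

definition Dpt :: "('a \<Rightarrow> 'a \<Rightarrow> bool) \<Rightarrow> 'a set \<Rightarrow> 'a set \<Rightarrow> real \<Rightarrow> 'a list set \<Rightarrow> real" where
  "Dpt R S T p x =
     (if x \<in> traces R S \<and> tmax R x \<subseteq> T
      then Bw R S p x / (\<Sum>\<^sub>\<infinity>y \<in> {y \<in> traces R S. tmax R y \<subseteq> T}. Bw R S p y)
      else 0)"

text \<open>Per iteration: a function call, two multiplications, an assignment to xi and one
  for the loop counter.\<close>
primrec loopA :: "('a \<Rightarrow> 'a \<Rightarrow> bool) \<Rightarrow> nat \<Rightarrow> nat \<Rightarrow> nat \<Rightarrow> ('a list set \<times> nat) pmf \<Rightarrow> 'a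
    \<Rightarrow> nat \<Rightarrow> ('a list set \<times> nat) pmf" where
  "loopA R ccall casg cmul D1 a 0 = return_pmf (tunit R, 0)"
| "loopA R ccall casg cmul D1 a (Suc k) =
     bind_pmf (loopA R ccall casg cmul D1 a k) (\<lambda>(\<xi>, c).
     bind_pmf D1 (\<lambda>(v, c').
     return_pmf (tmult R (tmult R \<xi> v) (tr R [a]), c + ccall + c' + 2 * cmul + casg + casg)))"

text \<open>Algorithm A_1(p,S,T), instrumented: returns the joint law of (output, number of steps).
  ch is the rule used to choose a_1 in S \<inter> T; cch, ccall, casg, cmul are the costs of a
  choice (also charged for the emptiness test of S \<inter> T), a function call, an assignment
  and a multiplication; g K is the cost of drawing the random integer K.
  The recursion is written with an explicit fuel argument n; A1 calls it with n = card S,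
  and since a_1 \<in> S every recursive call is on S - {a_1} with fuel card (S - {a_1}), so for
  finite S the fuel never runs out before S \<inter> T = {} (fuel 0 means S = {}).\<close>
primrec A1n :: "nat \<Rightarrow> 'a set \<Rightarrow> ('a \<Rightarrow> 'a \<Rightarrow> bool) \<Rightarrow> ('a set \<Rightarrow> 'a set \<Rightarrow> 'a) \<Rightarrow> real
    \<Rightarrow> nat \<Rightarrow> nat \<Rightarrow> nat \<Rightarrow> nat \<Rightarrow> (nat \<Rightarrow> nat) \<Rightarrow> 'a set \<Rightarrow> 'a set
    \<Rightarrow> ('a list set \<times> nat) pmf" where
  "A1n 0 \<Sigma> R ch p cch ccall casg cmul g S T = return_pmf (tunit R, cch + casg)"
| "A1n (Suc n) \<Sigma> R ch p cch ccall casg cmul g S T =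
    (if S \<inter> T = {} then return_pmf (tunit R, cch + casg)
     else
       let a = ch S T;
           r = 1 - mu R S p / mu R (S - {a}) p;
           D1 = A1n n \<Sigma> R ch p cch ccall casg cmul g (S - {a}) (Lset \<Sigma> R a);
           D2 = A1n n \<Sigma> R ch p cch ccall casg cmul g (S - {a}) T
       in bind_pmf (geometric_pmf (1 - r)) (\<lambda>K.
          bind_pmf (loopA R ccall casg cmul D1 a K) (\<lambda>(\<xi>, c).
          bind_pmf D2 (\<lambda>(v, c').
          return_pmf (tmult R \<xi> v,
             cch + cch + casg + g K + casg + c + ccall + c' + cmul + casg)))))"

definition A1 :: "'a set \<Rightarrow> ('a \<Rightarrow> 'a \<Rightarrow> bool) \<Rightarrow> ('a set \<Rightarrow> 'a set \<Rightarrow> 'a) \<Rightarrow> real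
    \<Rightarrow> nat \<Rightarrow> nat \<Rightarrow> nat \<Rightarrow> nat \<Rightarrow> (nat \<Rightarrow> nat) \<Rightarrow> 'a set \<Rightarrow> 'a set
    \<Rightarrow> ('a list set \<times> nat) pmf" where
  "A1 \<Sigma> R ch p cch ccall casg cmul g S T = A1n (card S) \<Sigma> R ch p cch ccall casg cmul g S T"

end

theory Submission
  imports Defs
begin


definition dep :: "('a \<Rightarrow> 'a \<Rightarrow> bool) \<Rightarrow> 'a \<Rightarrow> 'a \<Rightarrow> bool" where
  "dep R a b \<longleftrightarrow> a = b \<or> (R a b \<and> R b a)"

definition proj :: "'a \<Rightarrow> 'a \<Rightarrow> 'a list \<Rightarrow> 'a list" where
  "proj d e w = filter (\<lambda>x. x = d \<or> x = e) w"

definition peq :: "('a \<Rightarrow> 'a \<Rightarrow> bool) \<Rightarrow> 'a list \<Rightarrow> 'a list \<Rightarrow> bool" where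
  "peq R u v \<longleftrightarrow> (\<forall>d e. dep R d e \<longrightarrow> proj d e u = proj d e v)"

lemma dep_refl[simp]: "dep R a a" by (simp add: dep_def)
lemma dep_sym: "dep R a b \<Longrightarrow> dep R b a" by (auto simp: dep_def)

lemma proj_append[simp]: "proj d e (u @ v) = proj d e u @ proj d e v"
  by (simp add: proj_def)
lemma proj_Cons: "proj d e (c # v) = (if c = d \<or> c = e then c # proj d e v else proj d e v)"
  by (simp add: proj_def)
lemma proj_Nil[simp]: "proj d e [] = []" by (simp add: proj_def)

lemma peq_refl[simp]: "peq R u u" by (simp add: peq_def)
lemma peq_sym: "peq R u v \<Longrightarrow> peq R v u" by (simp add: peq_def)
lemma peq_trans: "peq R u v \<Longrightarrow> peq R v w \<Longrightarrow> peq R u w" by (simp add: peq_def)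
lemma peq_append: "peq R u u' \<Longrightarrow> peq R v v' \<Longrightarrow> peq R (u @ v) (u' @ v')"
  by (simp add: peq_def)
lemma peq_cancel_right: "peq R (u @ z) (v @ z) \<Longrightarrow> peq R u v"
  by (simp add: peq_def)
lemma peq_cancel_left: "peq R (z @ u) (z @ v) \<Longrightarrow> peq R u v"
  by (simp add: peq_def)

lemma in_set_proj: "x \<in> set w \<longleftrightarrow> proj x x w \<noteq> []"
  by (simp add: proj_def filter_empty_conv)

lemma peq_set: "peq R u v \<Longrightarrow> set u = set v"
proof -
  assume h: "peq R u v"
  have "x \<in> set u \<longleftrightarrow> x \<in> set v" for x
    using h unfolding peq_def in_set_proj by (metis dep_refl)
  then show ?thesis by blast
qed

lemma peq_cnt: "peq R u v \<Longrightarrow> proj a a u = proj a a v"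
  by (simp add: peq_def)

lemma peq_mset: "peq R u v \<Longrightarrow> mset u = mset v"
proof -
  assume h: "peq R u v"
  have "count (mset u) x = count (mset v) x" for x
  proof -
    have "proj x x u = proj x x v" using h by (simp add: peq_def)
    then have "filter (\<lambda>y. y = x) u = filter (\<lambda>y. y = x) v" by (simp add: proj_def)
    then have "filter ((=) x) u = filter ((=) x) v" by (metis (mono_tags, lifting) filter_cong)
    then show ?thesis by (simp add: count_mset count_list_eq_length_filter)
  qed
  then show ?thesis by (simp add: multiset_eq_iff)
qed

lemma peq_length: "peq R u v \<Longrightarrow> length u = length v"
  using peq_mset by (metis size_mset)

lemma move_right:
  assumes "\<forall>x\<in>set y. \<not> dep R c x"
  shows "peq R (c # y) (y @ [c])"
  unfolding peq_def
proof (intro allI impI)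
  fix d e assume de: "dep R d e"
  show "proj d e (c # y) = proj d e (y @ [c])"
  proof (cases "c = d \<or> c = e")
    case True
    have "proj d e y = []"
      unfolding proj_def filter_empty_conv
    proof (intro ballI notI)
      fix x assume x: "x \<in> set y" "x = d \<or> x = e"
      then have "dep R c x" using True de dep_sym by auto
      then show False using assms x by auto
    qed
    then show ?thesis using True by (simp add: proj_Cons)
  next
    case False
    then show ?thesis by (simp add: proj_Cons proj_def)
  qed
qed

lemma swap1_peq: "swap1 R u v \<Longrightarrow> peq R u v"
proof -
  assume "swap1 R u v"
  then obtain x y a b where u: "u = x @ [a, b] @ y" and v: "v = x @ [b, a] @ y" and nr: "\<not> R a b"
    unfolding swap1_def by blast
  show ?thesis
  proof (cases "a = b")
    case True then show ?thesis using u v by simp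
  next
    case False
    then have "\<not> dep R a b" using nr by (simp add: dep_def)
    then have "peq R (a # [b]) ([b] @ [a])" by (intro move_right) auto
    then show ?thesis unfolding u v by (intro peq_append) auto
  qed
qed

lemma equivclp_peq: "equivclp (swap1 R) u v \<Longrightarrow> peq R u v"
proof (induction rule: equivclp_induct)
  case base then show ?case by simp
next
  case (step y z)
  then show ?case using swap1_peq peq_sym peq_trans by metis
qed

lemma swap1_ctx: "swap1 R u v \<Longrightarrow> swap1 R (l @ u @ r) (l @ v @ r)"
  unfolding swap1_def by (metis append.assoc)

lemma equivclp_ctx: "equivclp (swap1 R) u v \<Longrightarrow> equivclp (swap1 R) (l @ u @ r) (l @ v @ r)"
proof (induction rule: equivclp_induct)
  case base then show ?case by (simp add: equivp_reflp[OF equivp_evquivclp])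
next
  case (step y z)
  have "equivclp (swap1 R) (l @ y @ r) (l @ z @ r)"
  proof (cases "swap1 R y z")
    case True
    then show ?thesis using swap1_ctx by (metis r_into_rtranclp symclpI(1) equivclp_def)
  next
    case False
    then have "swap1 R z y" using step by auto
    then show ?thesis using swap1_ctx by (metis r_into_rtranclp symclpI(2) equivclp_def)
  qed
  then show ?case using step.IH by (meson equivp_transp[OF equivp_evquivclp])
qed

lemma equivclp_move:
  assumes "\<forall>x\<in>set y. \<not> dep R c x"
  shows "equivclp (swap1 R) (xs @ c # y) (xs @ y @ [c])"
  using assms
proof (induction y arbitrary: xs)
  case Nil then show ?case by (simp add: equivp_reflp[OF equivp_evquivclp])
next
  case (Cons x y)
  have nd: "\<not> dep R c x" using Cons.prems by auto
  then have cx: "c \<noteq> x" "\<not> R c x \<or> \<not> R x c" by (auto simp: dep_def)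
  have "equivclp (swap1 R) [c, x] [x, c]"
  proof (cases "R c x")
    case False
    then have "swap1 R [c, x] [x, c]" unfolding swap1_def by (metis append_Nil append_Nil2)
    then show ?thesis by (metis r_into_rtranclp symclpI(1) equivclp_def)
  next
    case True
    then have "\<not> R x c" using cx by auto
    then have "swap1 R [x, c] [c, x]" unfolding swap1_def by (metis append_Nil append_Nil2)
    then show ?thesis by (metis r_into_rtranclp symclpI(2) equivclp_def)
  qed
  then have 1: "equivclp (swap1 R) (xs @ [c, x] @ y) (xs @ [x, c] @ y)" by (rule equivclp_ctx)
  have 2: "equivclp (swap1 R) ((xs @ [x]) @ c # y) ((xs @ [x]) @ y @ [c])"
    using Cons.IH[of "xs @ [x]"] Cons.prems by simp
  from 1 2 show ?case using equivp_transp[OF equivp_evquivclp] by fastforce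
qed

lemma proj_last_other:
  assumes "c \<notin> set u2" "x \<in> set u2"
  shows "proj c x u2 \<noteq> [] \<and> last (proj c x u2) = x"
proof -
  have "proj c x u2 \<noteq> []" using assms by (auto simp: proj_def filter_empty_conv)
  moreover have "last (proj c x u2) \<in> set (proj c x u2)" using calculation by simp
  then have "last (proj c x u2) = x" using assms(1) by (auto simp: proj_def)
  ultimately show ?thesis by simp
qed

lemma last_letter_indep:
  assumes h: "\<forall>d. dep R c d \<longrightarrow> last (proj c d (u1 @ c # u2)) = c" and c: "c \<notin> set u2"
  shows "\<forall>x\<in>set u2. \<not> dep R c x"
proof (intro ballI notI)
  fix x assume x: "x \<in> set u2" and d: "dep R c x"
  have "x \<noteq> c" using x c by auto
  have "last (proj c x (u1 @ c # u2)) = x" using proj_last_other[OF c x] by (simp add: proj_Cons)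
  then show False using h d \<open>x \<noteq> c\<close> by auto
qed

lemma peq_equivclp: "peq R u v \<Longrightarrow> equivclp (swap1 R) u v"
proof (induction "length v" arbitrary: u v rule: less_induct)
  case less
  show ?case
  proof (cases v rule: rev_cases)
    case Nil
    then have "u = []" using peq_set[OF less.prems] by simp
    then show ?thesis using Nil by (simp add: equivp_reflp[OF equivp_evquivclp])
  next
    case (snoc v' c)
    have "c \<in> set u" using peq_set[OF less.prems] snoc by simp
    then obtain u1 u2 where u: "u = u1 @ c # u2" and c: "c \<notin> set u2"
      using split_list_last by metis
    have "\<forall>d. dep R c d \<longrightarrow> last (proj c d u) = c"
      using less.prems snoc unfolding peq_def by (auto simp: proj_Cons)
    then have ind: "\<forall>x\<in>set u2. \<not> dep R c x" using last_letter_indep c u by metis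
    have 1: "equivclp (swap1 R) u (u1 @ u2 @ [c])" using equivclp_move[OF ind] u by simp
    then have "peq R (u1 @ u2 @ [c]) (v' @ [c])"
      using equivclp_peq less.prems snoc peq_sym peq_trans by metis
    then have "peq R (u1 @ u2) v'" using peq_cancel_right by (metis append.assoc)
    then have "equivclp (swap1 R) (u1 @ u2) v'" using less.hyps snoc by simp
    then have "equivclp (swap1 R) ([] @ (u1 @ u2) @ [c]) ([] @ v' @ [c])" by (rule equivclp_ctx)
    then show ?thesis using 1 snoc by (simp add: equivp_transp[OF equivp_evquivclp])
  qed
qed

lemma equivclp_iff_peq: "equivclp (swap1 R) u v \<longleftrightarrow> peq R u v"
  using peq_equivclp equivclp_peq by metis

lemma tr_eq_iff: "tr R u = tr R v \<longleftrightarrow> peq R u v"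
proof
  assume "tr R u = tr R v"
  then have "v \<in> tr R u" by (simp add: tr_def equivp_reflp[OF equivp_evquivclp])
  then show "peq R u v" by (simp add: tr_def equivclp_iff_peq)
next
  assume "peq R u v"
  then show "tr R u = tr R v" unfolding tr_def equivclp_iff_peq
    using peq_sym peq_trans by blast
qed

lemma in_tr: "w \<in> tr R u \<longleftrightarrow> peq R u w"
  by (simp add: tr_def equivclp_iff_peq)

lemma tmult_tr: "tmult R (tr R u) (tr R v) = tr R (u @ v)"
  unfolding tmult_def
proof (intro equalityI subsetI)
  fix w assume "w \<in> (\<Union>u'\<in>tr R u. \<Union>v'\<in>tr R v. tr R (u' @ v'))"
  then obtain u' v' where "peq R u u'" "peq R v v'" "w \<in> tr R (u' @ v')" by (auto simp: in_tr)
  then show "w \<in> tr R (u @ v)" by (metis in_tr peq_append peq_trans)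
next
  fix w assume "w \<in> tr R (u @ v)"
  moreover have "u \<in> tr R u" "v \<in> tr R v" by (simp_all add: in_tr)
  ultimately show "w \<in> (\<Union>u'\<in>tr R u. \<Union>v'\<in>tr R v. tr R (u' @ v'))" by blast
qed

lemma tlen_tr: "tlen (tr R w) = length w"
proof -
  have "w \<in> tr R w" by (simp add: in_tr)
  then have "(SOME x. x \<in> tr R w) \<in> tr R w" by (rule someI)
  then show ?thesis unfolding tlen_def by (metis in_tr peq_length)
qed

definition ismax :: "('a \<Rightarrow> 'a \<Rightarrow> bool) \<Rightarrow> 'a \<Rightarrow> 'a list \<Rightarrow> bool" where
  "ismax R b w \<longleftrightarrow> (\<exists>u. peq R w (u @ [b]))"

lemma tmax_tr: "tmax R (tr R w) = {b. ismax R b w}"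
  unfolding tmax_def ismax_def by (auto simp: tmult_tr tr_eq_iff)

lemma ismax_iff: "ismax R b w \<longleftrightarrow> b \<in> set w \<and> (\<forall>d. dep R b d \<longrightarrow> last (proj b d w) = b)"
proof
  assume "ismax R b w"
  then obtain u where h: "peq R w (u @ [b])" by (auto simp: ismax_def)
  then have "b \<in> set w" using peq_set by fastforce
  moreover have "\<forall>d. dep R b d \<longrightarrow> last (proj b d w) = b"
    using h unfolding peq_def by (auto simp: proj_def)
  ultimately show "b \<in> set w \<and> (\<forall>d. dep R b d \<longrightarrow> last (proj b d w) = b)" by blast
next
  assume h: "b \<in> set w \<and> (\<forall>d. dep R b d \<longrightarrow> last (proj b d w) = b)"
  then obtain u1 u2 where u: "w = u1 @ b # u2" and c: "b \<notin> set u2"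
    using split_list_last by metis
  then have "\<forall>x\<in>set u2. \<not> dep R b x" using last_letter_indep h by metis
  then have "equivclp (swap1 R) w (u1 @ u2 @ [b])" using equivclp_move u by metis
  then show "ismax R b w" unfolding ismax_def equivclp_iff_peq by (metis append.assoc)
qed

lemma ismax_peq: "peq R w w' \<Longrightarrow> ismax R b w \<Longrightarrow> ismax R b w'"
  unfolding ismax_def using peq_sym peq_trans by metis

lemma ismax_snoc: "ismax R b (w @ [b])"
  unfolding ismax_def using peq_refl by blast

lemma ismax_Nil: "\<not> ismax R b []"
  by (simp add: ismax_iff)

lemma ismax_single: "ismax R b [c] \<longleftrightarrow> b = c"
  by (auto simp: ismax_iff proj_def)

lemma ismax_append_right: "ismax R b y \<Longrightarrow> ismax R b (x @ y)"
  unfolding ismax_def by (metis append.assoc peq_append peq_refl)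

lemma ismax_append:
  assumes "ismax R b (x @ y)"
  shows "ismax R b y \<or> (ismax R b x \<and> (\<forall>d\<in>set y. \<not> dep R b d))"
proof (cases "b \<in> set y")
  case True
  have "\<forall>d. dep R b d \<longrightarrow> last (proj b d y) = b"
  proof (intro allI impI)
    fix d assume "dep R b d"
    then have "last (proj b d (x @ y)) = b" using assms by (simp add: ismax_iff)
    moreover have "proj b d y \<noteq> []" using True by (auto simp: proj_def filter_empty_conv)
    ultimately show "last (proj b d y) = b" by simp
  qed
  then show ?thesis using True by (simp add: ismax_iff)
next
  case False
  have ind: "\<forall>d\<in>set y. \<not> dep R b d"
  proof (intro ballI notI)
    fix d assume d: "d \<in> set y" "dep R b d"
    have "last (proj b d y) = d" "proj b d y \<noteq> []" using proj_last_other[OF False d(1)] by auto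
    then have "last (proj b d (x @ y)) = d" by simp
    moreover have "last (proj b d (x @ y)) = b" using assms d by (simp add: ismax_iff)
    ultimately show False using d False by auto
  qed
  have "\<forall>d. dep R b d \<longrightarrow> proj b d y = []"
    using ind False by (auto simp: proj_def filter_empty_conv)
  then have "ismax R b x" using assms False by (auto simp: ismax_iff)
  then show ?thesis using ind by blast
qed

lemma ismax_last: "w \<noteq> [] \<Longrightarrow> ismax R (last w) w"
  by (metis append_butlast_last_id ismax_snoc)



definition maxa :: "('a \<Rightarrow> 'a \<Rightarrow> bool) \<Rightarrow> 'a \<Rightarrow> 'a list \<Rightarrow> bool" where
  "maxa R a w \<longleftrightarrow> (\<forall>b. ismax R b w \<longrightarrow> b = a)"

definition cnt :: "'a \<Rightarrow> 'a list \<Rightarrow> nat" where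
  "cnt a w = length (proj a a w)"

lemma cnt_append[simp]: "cnt a (u @ v) = cnt a u + cnt a v" by (simp add: cnt_def)
lemma cnt_single[simp]: "cnt a [b] = (if b = a then 1 else 0)" by (simp add: cnt_def proj_def)
lemma cnt_Nil[simp]: "cnt a [] = 0" by (simp add: cnt_def)
lemma cnt_zero: "cnt a w = 0 \<longleftrightarrow> a \<notin> set w"
  by (auto simp add: cnt_def proj_def filter_empty_conv)
lemma peq_cnt': "peq R u v \<Longrightarrow> cnt a u = cnt a v"
  by (simp add: cnt_def peq_cnt)

lemma maxa_Nil: "maxa R a []" by (simp add: maxa_def ismax_Nil)

lemma decomp: "\<exists>\<xi> v. peq R w (\<xi> @ v) \<and> maxa R a \<xi> \<and> a \<notin> set v"
proof (induction w)
  case Nil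
  then show ?case using maxa_Nil by (metis append_Nil empty_iff list.set(1) peq_refl)
next
  case (Cons c w)
  then obtain \<xi> v where h: "peq R w (\<xi> @ v)" "maxa R a \<xi>" "a \<notin> set v" by blast
  have pc: "peq R (c # w) (c # \<xi> @ v)" using peq_append[OF peq_refl[of R "[c]"] h(1)] by simp
  show ?case
  proof (cases "c = a \<or> (\<exists>x\<in>set \<xi>. dep R c x)")
    case True
    have "maxa R a (c # \<xi>)" unfolding maxa_def
    proof (intro allI impI)
      fix b assume "ismax R b (c # \<xi>)"
      then have "ismax R b ([c] @ \<xi>)" by simp
      from ismax_append[OF this] show "b = a"
      proof
        assume "ismax R b \<xi>" then show ?thesis using h(2) by (simp add: maxa_def)
      next
        assume "ismax R b [c] \<and> (\<forall>d\<in>set \<xi>. \<not> dep R b d)"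
        then show ?thesis using True by (auto simp: ismax_single)
      qed
    qed
    then show ?thesis using pc h(3) by (metis append_Cons)
  next
    case False
    then have "peq R (c # \<xi>) (\<xi> @ [c])" by (intro move_right) auto
    then have "peq R (c # \<xi> @ v) (\<xi> @ c # v)"
      using peq_append[OF _ peq_refl[of R v]] by fastforce
    then have "peq R (c # w) (\<xi> @ c # v)" using pc peq_trans by blast
    moreover have "a \<notin> set (c # v)" using False h(3) by auto
    ultimately show ?thesis using h(2) by blast
  qed
qed

lemma uniq_step:
  assumes "peq R (\<xi> @ v1 @ [c]) (\<xi>' @ v')" "maxa R a \<xi>'" "c \<noteq> a"
  shows "\<exists>v2. peq R v' (v2 @ [c])"
proof -
  have "ismax R c (\<xi> @ v1 @ [c])" using ismax_snoc[of R c "\<xi> @ v1"] by simp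
  then have "ismax R c (\<xi>' @ v')" using ismax_peq[OF assms(1)] by blast
  from ismax_append[OF this] show ?thesis
    using assms(2,3) unfolding maxa_def ismax_def by blast
qed

lemma uniq:
  "peq R (\<xi> @ v) (\<xi>' @ v') \<Longrightarrow> maxa R a \<xi> \<Longrightarrow> maxa R a \<xi>' \<Longrightarrow> a \<notin> set v \<Longrightarrow> a \<notin> set v'
   \<Longrightarrow> peq R \<xi> \<xi>' \<and> peq R v v'"
proof (induction "length v + length v'" arbitrary: v v' \<xi> \<xi> rule: less_induct)
  case less
  show ?case
  proof (cases "v = [] \<and> v' = []")
    case True then show ?thesis using less.prems by simp
  next
    case False
    then consider "v \<noteq> []" | "v' \<noteq> []" by blast
    then show ?thesis
    proof cases
      case 1
      then obtain v1 c where v: "v = v1 @ [c]" by (metis rev_exhaust)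
      have "c \<noteq> a" using less.prems(4) v by auto
      then obtain v2 where v2: "peq R v' (v2 @ [c])"
        using uniq_step[of R \<xi> v1 c \<xi>' v' a] less.prems v by auto
      have "peq R (\<xi> @ v1 @ [c]) (\<xi>' @ v2 @ [c])"
        using less.prems(1) v peq_append[OF peq_refl v2] peq_trans by blast
      then have 1: "peq R (\<xi> @ v1) (\<xi>' @ v2)" using peq_cancel_right[of R "\<xi> @ v1" "[c]"] by simp
      have "set v' = set (v2 @ [c])" using peq_set[OF v2] .
      then have 2: "a \<notin> set v2" using less.prems(5) by auto
      have "length v2 + 1 = length v'" using peq_length[OF v2] by simp
      then have "peq R \<xi> \<xi>' \<and> peq R v1 v2"
        using less.hyps[OF _ 1 less.prems(2,3) _ 2] less.prems(4) v by auto
      then show ?thesis using v v2 by (metis peq_append peq_refl peq_sym peq_trans)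
    next
      case 2
      then obtain v1 c where v: "v' = v1 @ [c]" by (metis rev_exhaust)
      have "c \<noteq> a" using less.prems(5) v by auto
      then obtain v2 where v2: "peq R v (v2 @ [c])"
        using uniq_step[of R \<xi>' v1 c \<xi> v a] less.prems v peq_sym by metis
      have "peq R (\<xi>' @ v1 @ [c]) (\<xi> @ v2 @ [c])"
        using less.prems(1) v peq_append[OF peq_refl v2] peq_trans peq_sym by metis
      then have 1: "peq R (\<xi> @ v2) (\<xi>' @ v1)"
        using peq_cancel_right[of R "\<xi>' @ v1" "[c]" "\<xi> @ v2"] peq_sym by fastforce
      have "set v = set (v2 @ [c])" using peq_set[OF v2] .
      then have 2: "a \<notin> set v2" using less.prems(4) by auto
      have "length v2 + 1 = length v" using peq_length[OF v2] by simp
      then have "peq R \<xi> \<xi>' \<and> peq R v2 v1"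
        using less.hyps[OF _ 1 less.prems(2,3) 2] less.prems(5) v by auto
      then show ?thesis using v v2 by (metis peq_append peq_refl peq_sym peq_trans)
    qed
  qed
qed



definition Xs :: "('a \<Rightarrow> 'a \<Rightarrow> bool) \<Rightarrow> 'a set \<Rightarrow> 'a set \<Rightarrow> 'a list set set" where
  "Xs R S T = {x \<in> traces R S. tmax R x \<subseteq> T}"

definition Lk :: "('a \<Rightarrow> 'a \<Rightarrow> bool) \<Rightarrow> 'a set \<Rightarrow> 'a \<Rightarrow> nat \<Rightarrow> 'a list set set" where
  "Lk R S a k = {x. \<exists>\<xi>. x = tr R \<xi> \<and> \<xi> \<in> lists S \<and> cnt a \<xi> = k \<and> maxa R a \<xi>}"

lemma Xs_tr: "tr R w \<in> Xs R S T \<longleftrightarrow> w \<in> lists S \<and> (\<forall>b. ismax R b w \<longrightarrow> b \<in> T)"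
proof
  assume h: "tr R w \<in> Xs R S T"
  then obtain w' where w': "w' \<in> lists S" "tr R w = tr R w'"
    by (auto simp: Xs_def traces_def)
  have "tmax R (tr R w) \<subseteq> T" using h by (simp add: Xs_def)
  then have 1: "\<forall>b. ismax R b w \<longrightarrow> b \<in> T" by (auto simp: tmax_tr)
  have "set w = set w'" using w'(2) peq_set by (metis tr_eq_iff)
  then have "w \<in> lists S" using w'(1) by (simp add: in_lists_conv_set)
  then show "w \<in> lists S \<and> (\<forall>b. ismax R b w \<longrightarrow> b \<in> T)" using 1 by blast
next
  assume "w \<in> lists S \<and> (\<forall>b. ismax R b w \<longrightarrow> b \<in> T)"
  then show "tr R w \<in> Xs R S T" by (auto simp: Xs_def traces_def tmax_tr)
qed

lemma Xs_ex: "x \<in> Xs R S T \<Longrightarrow> \<exists>w. x = tr R w"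
  by (auto simp: Xs_def traces_def)

lemma Lk_tr: "tr R w \<in> Lk R S a k \<longleftrightarrow> w \<in> lists S \<and> cnt a w = k \<and> maxa R a w"
proof
  assume "tr R w \<in> Lk R S a k"
  then obtain \<xi> where "tr R w = tr R \<xi>" "\<xi> \<in> lists S" "cnt a \<xi> = k" "maxa R a \<xi>"
    by (auto simp: Lk_def)
  moreover then have p: "peq R w \<xi>" by (simp add: tr_eq_iff)
  moreover have "set w = set \<xi>" using peq_set[OF p] .
  moreover have "cnt a w = cnt a \<xi>" using peq_cnt'[OF p] .
  moreover have "maxa R a w" using calculation(4) ismax_peq[OF p] unfolding maxa_def by blast
  ultimately show "w \<in> lists S \<and> cnt a w = k \<and> maxa R a w"
    by (simp add: in_lists_conv_set)
next
  assume "w \<in> lists S \<and> cnt a w = k \<and> maxa R a w"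
  then show "tr R w \<in> Lk R S a k" by (auto simp: Lk_def)
qed

lemma Lk_ex: "x \<in> Lk R S a k \<Longrightarrow> \<exists>w. x = tr R w"
  by (auto simp: Lk_def)

lemma Lk0: "Lk R S a 0 = {tr R []}"
proof (intro equalityI subsetI)
  fix x assume "x \<in> Lk R S a 0"
  then obtain w where x: "x = tr R w" and w: "w \<in> lists S" "cnt a w = 0" "maxa R a w"
    using Lk_ex Lk_tr by metis
  have "w = []"
  proof (rule ccontr)
    assume "w \<noteq> []"
    then have "ismax R (last w) w" by (rule ismax_last)
    then have "last w = a" using w(3) by (simp add: maxa_def)
    then show False using w(2) \<open>w \<noteq> []\<close> by (metis cnt_zero last_in_set)
  qed
  then show "x \<in> {tr R []}" using x by simp
next
  fix x assume "x \<in> {tr R []}"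
  then show "x \<in> Lk R S a 0" using Lk_tr[of R "[]"] by (simp add: maxa_Nil)
qed

context
  fixes \<Sigma> :: "'a set" and R :: "'a \<Rightarrow> 'a \<Rightarrow> bool" and S :: "'a set" and a :: 'a
  assumes refl: "\<forall>a\<in>\<Sigma>. R a a" and sym: "\<forall>a\<in>\<Sigma>. \<forall>b\<in>\<Sigma>. R a b \<longrightarrow> R b a"
    and SS: "S \<subseteq> \<Sigma>" and aS: "a \<in> S"
begin

lemma dep_Lset: "b \<in> \<Sigma> \<Longrightarrow> dep R b a \<longleftrightarrow> b \<in> Lset \<Sigma> R a"
  using refl sym SS aS by (auto simp: dep_def Lset_def)

lemma Lk_step_img1:
  assumes "\<xi> \<in> Lk R S a k" "v \<in> Xs R (S - {a}) (Lset \<Sigma> R a)"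
  shows "tmult R (tmult R \<xi> v) (tr R [a]) \<in> Lk R S a (Suc k)"
proof -
  obtain \<xi>w vw where e: "\<xi> = tr R \<xi>w" "v = tr R vw" using assms Lk_ex Xs_ex by metis
  have \<xi>w: "\<xi>w \<in> lists S" "cnt a \<xi>w = k" "maxa R a \<xi>w" using assms(1) unfolding e Lk_tr by auto
  have vw: "vw \<in> lists (S - {a})" "\<forall>b. ismax R b vw \<longrightarrow> b \<in> Lset \<Sigma> R a" using assms(2) unfolding e Xs_tr by auto
  have "maxa R a (\<xi>w @ vw @ [a])" unfolding maxa_def
  proof (intro allI impI)
    fix b assume "ismax R b (\<xi>w @ vw @ [a])"
    then have "ismax R b ((\<xi>w @ vw) @ [a])" by simp
    from ismax_append[OF this] show "b = a"
    proof
      assume "ismax R b [a]" then show ?thesis by (simp add: ismax_single)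
    next
      assume h: "ismax R b (\<xi>w @ vw) \<and> (\<forall>d\<in>set [a]. \<not> dep R b d)"
      from ismax_append[OF conjunct1[OF h]] show ?thesis
      proof
        assume "ismax R b vw"
        then have "b \<in> Lset \<Sigma> R a" using vw by blast
        then have "dep R b a" using dep_Lset by (auto simp: Lset_def)
        then show ?thesis using h by auto
      next
        assume "ismax R b \<xi>w \<and> (\<forall>d\<in>set vw. \<not> dep R b d)"
        then show ?thesis using \<xi>w(3) by (simp add: maxa_def)
      qed
    qed
  qed
  moreover have "cnt a vw = 0" using vw(1) by (auto simp: cnt_zero)
  ultimately have "tr R (\<xi>w @ vw @ [a]) \<in> Lk R S a (Suc k)"
    using \<xi>w vw aS by (subst Lk_tr) auto
  then show ?thesis using e by (simp add: tmult_tr)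
qed

lemma Lk_step_img2:
  assumes "\<zeta> \<in> Lk R S a (Suc k)"
  shows "\<exists>\<xi> v. \<xi> \<in> Lk R S a k \<and> v \<in> Xs R (S - {a}) (Lset \<Sigma> R a) \<and> \<zeta> = tmult R (tmult R \<xi> v) (tr R [a])"
proof -
  obtain w where e: "\<zeta> = tr R w" using assms Lk_ex by metis
  have w: "w \<in> lists S" "cnt a w = Suc k" "maxa R a w" using assms unfolding e Lk_tr by auto
  have "w \<noteq> []" using w(2) by auto
  then have "ismax R (last w) w" by (rule ismax_last)
  then have "ismax R a w" using w(3) by (simp add: maxa_def)
  then obtain u where u: "peq R w (u @ [a])" by (auto simp: ismax_def)
  obtain \<xi> v where d: "peq R u (\<xi> @ v)" "maxa R a \<xi>" "a \<notin> set v" using decomp by metis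
  have wu: "peq R w (\<xi> @ v @ [a])" using u d(1) peq_append[OF d(1) peq_refl[of R "[a]"]] peq_trans by fastforce
  have sets: "set w = set \<xi> \<union> set v \<union> {a}" using peq_set[OF wu] by auto
  have "cnt a w = cnt a \<xi> + cnt a v + 1" using peq_cnt'[OF wu] by simp
  then have ck: "cnt a \<xi> = k" using d(3) w(2) by (simp add: cnt_zero)
  have \<xi>L: "tr R \<xi> \<in> Lk R S a k" using w(1) sets ck d(2) by (subst Lk_tr) auto
  have "\<forall>b. ismax R b v \<longrightarrow> b \<in> Lset \<Sigma> R a"
  proof (intro allI impI)
    fix b assume "ismax R b v"
    then obtain v1 where v1: "peq R v (v1 @ [b])" by (auto simp: ismax_def)
    have "b \<in> set v" using peq_set[OF v1] by auto
    then have bS: "b \<in> \<Sigma>" "b \<noteq> a" using sets w(1) SS d(3) by auto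
    show "b \<in> Lset \<Sigma> R a"
    proof (rule ccontr)
      assume "b \<notin> Lset \<Sigma> R a"
      then have nd: "\<not> dep R b a" using dep_Lset bS by blast
      have "peq R (b # [a]) ([a] @ [b])" using nd by (intro move_right) auto
      then have "peq R (\<xi> @ v1 @ [b, a]) ((\<xi> @ v1 @ [a]) @ [b])"
        using peq_append[OF peq_refl[of R "\<xi> @ v1"]] by fastforce
      moreover have "peq R w (\<xi> @ v1 @ [b, a])"
        using wu peq_append[OF peq_refl[of R \<xi>] peq_append[OF v1 peq_refl[of R "[a]"]]] peq_trans by fastforce
      ultimately have "ismax R b w" unfolding ismax_def using peq_trans by blast
      then show False using w(3) bS by (simp add: maxa_def)
    qed
  qed
  then have vX: "tr R v \<in> Xs R (S - {a}) (Lset \<Sigma> R a)" using sets w(1) d(3) by (subst Xs_tr) auto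
  have "\<zeta> = tmult R (tmult R (tr R \<xi>) (tr R v)) (tr R [a])"
    using e wu by (simp add: tmult_tr tr_eq_iff)
  then show ?thesis using \<xi>L vX by blast
qed

lemma Lk_step_inj:
  "inj_on (\<lambda>(\<xi>, v). tmult R (tmult R \<xi> v) (tr R [a])) (Lk R S a k \<times> Xs R (S - {a}) (Lset \<Sigma> R a))"
proof (intro inj_onI, clarify)
  fix \<xi>1 v1 \<xi>2 v2
  assume m: "\<xi>1 \<in> Lk R S a k" "v1 \<in> Xs R (S - {a}) (Lset \<Sigma> R a)"
    "\<xi>2 \<in> Lk R S a k" "v2 \<in> Xs R (S - {a}) (Lset \<Sigma> R a)"
    and eq: "tmult R (tmult R \<xi>1 v1) (tr R [a]) = tmult R (tmult R \<xi>2 v2) (tr R [a])"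
  obtain x1 y1 x2 y2 where e: "\<xi>1 = tr R x1" "v1 = tr R y1" "\<xi>2 = tr R x2" "v2 = tr R y2"
    using m Lk_ex Xs_ex by metis
  have "peq R ((x1 @ y1) @ [a]) ((x2 @ y2) @ [a])" using eq e by (simp add: tmult_tr tr_eq_iff)
  then have p: "peq R (x1 @ y1) (x2 @ y2)" by (rule peq_cancel_right)
  have "maxa R a x1" "maxa R a x2" using m unfolding e Lk_tr by auto
  moreover have "a \<notin> set y1" "a \<notin> set y2" using m unfolding e Xs_tr by auto
  ultimately have "peq R x1 x2 \<and> peq R y1 y2" using uniq[OF p] by blast
  then show "\<xi>1 = \<xi>2 \<and> v1 = v2" using e by (simp add: tr_eq_iff)
qed

lemma Fin_img1:
  assumes "a \<in> T" "\<xi> \<in> Lk R S a k" "v \<in> Xs R (S - {a}) T"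
  shows "tmult R \<xi> v \<in> Xs R S T"
proof -
  obtain \<xi>w vw where e: "\<xi> = tr R \<xi>w" "v = tr R vw" using assms Lk_ex Xs_ex by metis
  have \<xi>w: "\<xi>w \<in> lists S" "maxa R a \<xi>w" using assms(2) unfolding e Lk_tr by auto
  have vw: "vw \<in> lists (S - {a})" "\<forall>b. ismax R b vw \<longrightarrow> b \<in> T" using assms(3) unfolding e Xs_tr by auto
  have "\<forall>b. ismax R b (\<xi>w @ vw) \<longrightarrow> b \<in> T"
  proof (intro allI impI)
    fix b assume "ismax R b (\<xi>w @ vw)"
    from ismax_append[OF this] show "b \<in> T"
      using \<xi>w(2) vw(2) assms(1) unfolding maxa_def by blast
  qed
  then have "tr R (\<xi>w @ vw) \<in> Xs R S T" using \<xi>w vw by (subst Xs_tr) auto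
  then show ?thesis using e by (simp add: tmult_tr)
qed

lemma Fin_img2:
  assumes "x \<in> Xs R S T"
  shows "\<exists>k \<xi> v. \<xi> \<in> Lk R S a k \<and> v \<in> Xs R (S - {a}) T \<and> x = tmult R \<xi> v"
proof -
  obtain w where e: "x = tr R w" using assms Xs_ex by metis
  have w: "w \<in> lists S" "\<forall>b. ismax R b w \<longrightarrow> b \<in> T" using assms unfolding e Xs_tr by auto
  obtain \<xi> v where d: "peq R w (\<xi> @ v)" "maxa R a \<xi>" "a \<notin> set v" using decomp by metis
  have sets: "set w = set \<xi> \<union> set v" using peq_set[OF d(1)] by auto
  have "tr R \<xi> \<in> Lk R S a (cnt a \<xi>)" using w(1) sets d(2) by (subst Lk_tr) auto
  moreover have "\<forall>b. ismax R b v \<longrightarrow> b \<in> T"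
  proof (intro allI impI)
    fix b assume "ismax R b v"
    then have "ismax R b (\<xi> @ v)" by (rule ismax_append_right)
    then have "ismax R b w" using ismax_peq[OF peq_sym[OF d(1)]] by blast
    then show "b \<in> T" using w(2) by blast
  qed
  then have "tr R v \<in> Xs R (S - {a}) T" using w(1) sets d(3) by (subst Xs_tr) auto
  moreover have "x = tmult R (tr R \<xi>) (tr R v)" using e d(1) by (simp add: tmult_tr tr_eq_iff)
  ultimately show ?thesis by blast
qed

lemma Fin_k:
  assumes "\<xi> \<in> Lk R S a k" "v \<in> Xs R (S - {a}) T" "\<xi>' \<in> Lk R S a k'" "v' \<in> Xs R (S - {a}) T"
    and "tmult R \<xi> v = tmult R \<xi>' v'"
  shows "k = k'"
proof -
  obtain x1 y1 x2 y2 where e: "\<xi> = tr R x1" "v = tr R y1" "\<xi>' = tr R x2" "v' = tr R y2"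
    using assms Lk_ex Xs_ex by metis
  have p: "peq R (x1 @ y1) (x2 @ y2)" using assms(5) e by (simp add: tmult_tr tr_eq_iff)
  have "cnt a x1 = k" "cnt a x2 = k'" using assms unfolding e Lk_tr by auto
  moreover have "a \<notin> set y1" "a \<notin> set y2" using assms unfolding e Xs_tr by auto
  ultimately show ?thesis using peq_cnt'[OF p, of a] by (simp add: cnt_zero[symmetric])
qed

lemma Fin_inj:
  "inj_on (\<lambda>(\<xi>, v). tmult R \<xi> v) (Lk R S a k \<times> Xs R (S - {a}) T)"
proof (intro inj_onI, clarify)
  fix \<xi>1 v1 \<xi>2 v2
  assume m: "\<xi>1 \<in> Lk R S a k" "v1 \<in> Xs R (S - {a}) T"
    "\<xi>2 \<in> Lk R S a k" "v2 \<in> Xs R (S - {a}) T"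
    and eq: "tmult R \<xi>1 v1 = tmult R \<xi>2 v2"
  obtain x1 y1 x2 y2 where e: "\<xi>1 = tr R x1" "v1 = tr R y1" "\<xi>2 = tr R x2" "v2 = tr R y2"
    using m Lk_ex Xs_ex by metis
  have p: "peq R (x1 @ y1) (x2 @ y2)" using eq e by (simp add: tmult_tr tr_eq_iff)
  have "maxa R a x1" "maxa R a x2" using m unfolding e Lk_tr by auto
  moreover have "a \<notin> set y1" "a \<notin> set y2" using m unfolding e Xs_tr by auto
  ultimately have "peq R x1 x2 \<and> peq R y1 y2" using uniq[OF p] by blast
  then show "\<xi>1 = \<xi>2 \<and> v1 = v2" using e by (simp add: tr_eq_iff)
qed

end

lemma Xs_empty:
  assumes "S \<inter> T = {}"
  shows "Xs R S T = {tr R []}"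
proof (intro equalityI subsetI)
  fix x assume x: "x \<in> Xs R S T"
  then obtain w where e: "x = tr R w" using Xs_ex by metis
  have w: "w \<in> lists S" "\<forall>b. ismax R b w \<longrightarrow> b \<in> T" using x unfolding e Xs_tr by auto
  have "w = []"
  proof (rule ccontr)
    assume "w \<noteq> []"
    then have "ismax R (last w) w" by (rule ismax_last)
    then have "last w \<in> T" using w by blast
    moreover have "last w \<in> S" using w(1) \<open>w \<noteq> []\<close> by (meson in_lists_conv_set last_in_set)
    ultimately show False using assms by blast
  qed
  then show "x \<in> {tr R []}" using e by simp
next
  fix x assume "x \<in> {tr R []}"
  then show "x \<in> Xs R S T" by (simp add: Xs_tr ismax_Nil)
qed

lemma tlen_tmult: "tlen (tmult R (tr R u) (tr R v)) = tlen (tr R u) + tlen (tr R v)"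
  by (simp add: tmult_tr tlen_tr)



lemma has_sum_pmf: "set_pmf M \<subseteq> A \<Longrightarrow> (pmf M has_sum 1) A"
proof -
  assume A: "set_pmf M \<subseteq> A"
  have a: "Infinite_Set_Sum.abs_summable_on (pmf M) A" by (rule pmf_abs_summable)
  then have "infsetsum (pmf M) A = infsum (pmf M) A" by (rule infsetsum_infsum)
  moreover have "infsetsum (pmf M) A = 1" using A by (rule infsetsum_pmf_eq_1)
  moreover have "pmf M summable_on A"
    using a abs_summable_equivalent abs_summable_summable by blast
  ultimately show ?thesis by (simp add: has_sum_iff)
qed

lemma pmf_map_pair_in:
  assumes inj: "inj_on G (A \<times> B)" and M: "set_pmf M \<subseteq> A" and N: "set_pmf N \<subseteq> B"
    and x: "x \<in> A" and y: "y \<in> B"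
  shows "pmf (map_pmf G (pair_pmf M N)) (G (x, y)) = pmf M x * pmf N y"
proof (cases "(x, y) \<in> set_pmf (pair_pmf M N)")
  case True
  have "inj_on G (set_pmf (pair_pmf M N))" by (rule inj_on_subset[OF inj]) (use M N in auto)
  then show ?thesis using True by (simp add: pmf_map_inj pmf_pair)
next
  case False
  then have 0: "pmf M x * pmf N y = 0" by (simp add: set_pmf_iff pmf_pair)
  have "G (x, y) \<notin> G ` set_pmf (pair_pmf M N)"
  proof
    assume "G (x, y) \<in> G ` set_pmf (pair_pmf M N)"
    then obtain z where z: "z \<in> set_pmf (pair_pmf M N)" "G (x, y) = G z" by auto
    have "z \<in> A \<times> B" using z(1) M N by auto
    then have "z = (x, y)" using inj z(2) x y by (auto simp: inj_on_def)
    then show False using z(1) False by simp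
  qed
  then show ?thesis using 0 by (simp add: pmf_map_outside)
qed

lemma pmf_map_pair_out:
  assumes M: "set_pmf M \<subseteq> A" and N: "set_pmf N \<subseteq> B" and z: "z \<notin> G ` (A \<times> B)"
  shows "pmf (map_pmf G (pair_pmf M N)) z = 0"
proof -
  have "z \<notin> G ` set_pmf (pair_pmf M N)" using z M N by auto
  then show ?thesis by (rule pmf_map_outside)
qed

lemma map_fst_bind2:
  "map_pmf fst (bind_pmf M (\<lambda>(\<xi>, c). bind_pmf N (\<lambda>(v, c'). return_pmf (f \<xi> v, h \<xi> c v c')))) =
   map_pmf (\<lambda>(\<xi>, v). f \<xi> v) (pair_pmf (map_pmf fst M) (map_pmf fst N))"
  by (simp add: pair_pmf_def map_bind_pmf bind_map_pmf map_return_pmf case_prod_beta)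

lemma finite_cliques: "finite S \<Longrightarrow> finite {\<gamma>. is_clique R S \<gamma>}"
  by (rule finite_subset[of _ "Pow S"]) (auto simp: is_clique_def)

lemma mu_zero: "finite S \<Longrightarrow> mu R S (0::'b::comm_ring_1) = 1"
proof -
  assume fin: "finite S"
  have "mu R S (0::'b) = (\<Sum>\<gamma>\<in>{\<gamma>. is_clique R S \<gamma>}. if \<gamma> = {} then 1 else 0)"
    unfolding mu_def
  proof (rule sum.cong[OF refl])
    fix \<gamma> assume "\<gamma> \<in> {\<gamma>. is_clique R S \<gamma>}"
    then have "finite \<gamma>" using fin by (auto simp: is_clique_def intro: finite_subset)
    then show "(- 1) ^ card \<gamma> * (0::'b) ^ card \<gamma> = (if \<gamma> = {} then 1 else 0)"
      by (auto simp: card_eq_0_iff power_0_left)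
  qed
  also have "\<dots> = 1" using finite_cliques[OF fin, of R]
    by (simp add: sum.delta'[unfolded] is_clique_def)
  finally show ?thesis .
qed

context
  fixes \<Sigma> :: "'a set" and R :: "'a \<Rightarrow> 'a \<Rightarrow> bool"
  assumes Rrefl: "\<forall>a\<in>\<Sigma>. R a a" and Rsym: "\<forall>a\<in>\<Sigma>. \<forall>b\<in>\<Sigma>. R a b \<longrightarrow> R b a"
begin

lemma mu_split:
  fixes X :: "'b::comm_ring_1"
  assumes fin: "finite S" and SS: "S \<subseteq> \<Sigma>" and aS: "a \<in> S"
  shows "mu R S X = mu R (S - {a}) X - X * mu R (S - Lset \<Sigma> R a) X"
proof -
  let ?C = "{\<gamma>. is_clique R S \<gamma>}"
  let ?Cz = "{\<gamma>. is_clique R (S - {a}) \<gamma>}"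
  let ?Co = "{\<gamma>. is_clique R (S - Lset \<Sigma> R a) \<gamma>}"
  have aL: "a \<in> Lset \<Sigma> R a" using aS SS Rrefl by (auto simp: Lset_def)
  have split: "?C = ?Cz \<union> insert a ` ?Co"
  proof (intro equalityI subsetI)
    fix \<gamma> assume g: "\<gamma> \<in> ?C"
    show "\<gamma> \<in> ?Cz \<union> insert a ` ?Co"
    proof (cases "a \<in> \<gamma>")
      case False then show ?thesis using g by (auto simp: is_clique_def)
    next
      case True
      have "\<gamma> - {a} \<in> ?Co"
        using g True SS by (auto simp: is_clique_def Lset_def)
      then show ?thesis using True by (auto intro!: image_eqI[of _ _ "\<gamma> - {a}"])
    qed
  next
    fix \<gamma> assume "\<gamma> \<in> ?Cz \<union> insert a ` ?Co"
    then show "\<gamma> \<in> ?C"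
    proof (elim UnE)
      assume "\<gamma> \<in> ?Cz" then show ?thesis by (auto simp: is_clique_def)
    next
      assume "\<gamma> \<in> insert a ` ?Co"
      then obtain \<gamma>' where g: "\<gamma> = insert a \<gamma>'" "is_clique R (S - Lset \<Sigma> R a) \<gamma>'" by auto
      have "\<forall>b\<in>\<gamma>'. b \<in> \<Sigma> \<and> \<not> R a b" using g(2) SS by (auto simp: is_clique_def Lset_def)
      then have "\<forall>b\<in>\<gamma>'. \<not> R b a" using Rsym aS SS by blast
      moreover have "a \<notin> \<gamma>'" using g(2) aL by (auto simp: is_clique_def)
      ultimately show ?thesis using g aS \<open>\<forall>b\<in>\<gamma>'. b \<in> \<Sigma> \<and> \<not> R a b\<close>
        unfolding is_clique_def by (simp, blast)
    qed
  qed
  have disj: "?Cz \<inter> insert a ` ?Co = {}" by (auto simp: is_clique_def)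
  have finC0: "finite ?Cz" using fin by (intro finite_cliques) auto
  have finC1: "finite ?Co" using fin by (intro finite_cliques) auto
  have inj: "inj_on (insert a) ?Co"
  proof (rule inj_onI)
    fix x y assume "x \<in> ?Co" "y \<in> ?Co" "insert a x = insert a y"
    moreover then have "a \<notin> x" "a \<notin> y" using aL by (auto simp: is_clique_def)
    ultimately show "x = y" by (metis Diff_insert_absorb)
  qed
  have "mu R S X = (\<Sum>\<gamma>\<in>?Cz. (-1) ^ card \<gamma> * X ^ card \<gamma>) + (\<Sum>\<gamma>\<in>insert a ` ?Co. (-1) ^ card \<gamma> * X ^ card \<gamma>)"
    unfolding mu_def split using finC0 finC1 disj by (intro sum.union_disjoint) auto
  also have "(\<Sum>\<gamma>\<in>insert a ` ?Co. (-1) ^ card \<gamma> * X ^ card \<gamma>) =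
      (\<Sum>\<gamma>\<in>?Co. (-1) ^ card (insert a \<gamma>) * X ^ card (insert a \<gamma>))"
    using inj by (simp add: sum.reindex)
  also have "\<dots> = (\<Sum>\<gamma>\<in>?Co. - X * ((-1) ^ card \<gamma> * X ^ card \<gamma>))"
  proof (rule sum.cong[OF refl])
    fix \<gamma> assume g: "\<gamma> \<in> ?Co"
    then have "finite \<gamma>" "a \<notin> \<gamma>" using fin aL by (auto simp: is_clique_def intro: finite_subset)
    then show "(-1) ^ card (insert a \<gamma>) * X ^ card (insert a \<gamma>) = - X * ((-1) ^ card \<gamma> * X ^ card \<gamma>)"
      by (simp add: algebra_simps)
  qed
  also have "\<dots> = - X * mu R (S - Lset \<Sigma> R a) X" by (simp add: mu_def sum_distrib_left)
  finally show ?thesis by (simp add: mu_def)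
qed

end

lemma mu_cont: "continuous_on UNIV (\<lambda>t::real. mu R S t)"
  unfolding mu_def by (intro continuous_intros)

lemma mu_of_real: "mu R S (complex_of_real t) = complex_of_real (mu R S t)"
  unfolding mu_def by simp



lemma tlen_tmult_range:
  assumes "x \<in> range (tr R)" "y \<in> range (tr R)"
  shows "tlen (tmult R x y) = tlen x + tlen y"
  using assms tlen_tmult by auto

lemma Xs_range: "x \<in> Xs R S T \<Longrightarrow> x \<in> range (tr R)" by (metis Xs_ex rangeI)
lemma Lk_range: "x \<in> Lk R S a k \<Longrightarrow> x \<in> range (tr R)" by (metis Lk_ex rangeI)

lemma set_pmf_sub: "(\<And>x. pmf M x = (if x \<in> A then f x else 0)) \<Longrightarrow> set_pmf M \<subseteq> A"
  by (auto simp: set_pmf_eq)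

locale alg =
  fixes \<Sigma> :: "'a set" and R :: "'a \<Rightarrow> 'a \<Rightarrow> bool" and ch :: "'a set \<Rightarrow> 'a set \<Rightarrow> 'a"
    and p :: real and cch ccall casg cmul :: nat and g :: "nat \<Rightarrow> nat"
  assumes fin: "finite \<Sigma>" and Rrefl: "\<forall>a\<in>\<Sigma>. R a a" and Rsym: "\<forall>a\<in>\<Sigma>. \<forall>b\<in>\<Sigma>. R a b \<longrightarrow> R b a"
    and ch: "\<forall>X Y. X \<inter> Y \<noteq> {} \<longrightarrow> ch X Y \<in> X \<inter> Y" and ppos: "0 < p"
begin

lemma loop_pmf:
  assumes SS: "S \<subseteq> \<Sigma>" and aS: "a \<in> S" and Z: "Z > 0"
    and D1: "\<And>v. pmf (map_pmf fst D1) v = (if v \<in> Xs R (S - {a}) (Lset \<Sigma> R a) then p ^ tlen v / Z else 0)"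
  shows "pmf (map_pmf fst (loopA R ccall casg cmul D1 a k)) \<xi> =
    (if \<xi> \<in> Lk R S a k then p ^ tlen \<xi> / (p * Z) ^ k else 0)"
proof (induction k arbitrary: \<xi>)
  case 0
  show ?case by (auto simp: Lk0 tunit_def pmf_return tlen_tr)
next
  case (Suc k)
  let ?V = "Xs R (S - {a}) (Lset \<Sigma> R a)"
  let ?G = "\<lambda>(\<xi>, v). tmult R (tmult R \<xi> v) (tr R [a])"
  have eq: "map_pmf fst (loopA R ccall casg cmul D1 a (Suc k)) =
      map_pmf ?G (pair_pmf (map_pmf fst (loopA R ccall casg cmul D1 a k)) (map_pmf fst D1))"
    by (simp add: map_fst_bind2)
  have s1: "set_pmf (map_pmf fst (loopA R ccall casg cmul D1 a k)) \<subseteq> Lk R S a k"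
    by (rule set_pmf_sub[OF Suc.IH])
  have s2: "set_pmf (map_pmf fst D1) \<subseteq> ?V" by (rule set_pmf_sub[OF D1])
  have inj: "inj_on ?G (Lk R S a k \<times> ?V)" using Lk_step_inj[OF Rrefl Rsym SS aS] .
  show ?case
  proof (cases "\<xi> \<in> Lk R S a (Suc k)")
    case True
    then obtain \<xi>0 v0 where d: "\<xi>0 \<in> Lk R S a k" "v0 \<in> ?V" "\<xi> = ?G (\<xi>0, v0)"
      using Lk_step_img2[OF Rrefl Rsym SS aS] by fastforce
    have "pmf (map_pmf fst (loopA R ccall casg cmul D1 a (Suc k))) \<xi> =
        pmf (map_pmf fst (loopA R ccall casg cmul D1 a k)) \<xi>0 * pmf (map_pmf fst D1) v0"
      unfolding eq d(3) by (rule pmf_map_pair_in[OF inj s1 s2 d(1,2)])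
    also have "\<dots> = (p ^ tlen \<xi>0 / (p * Z) ^ k) * (p ^ tlen v0 / Z)"
      using Suc.IH D1 d by simp
    also have "\<dots> = p ^ tlen \<xi> / (p * Z) ^ Suc k"
    proof -
      obtain xw vw where e: "\<xi>0 = tr R xw" "v0 = tr R vw" using d(1,2) Lk_ex Xs_ex by metis
      have "tlen \<xi> = tlen \<xi>0 + tlen v0 + 1"
        using d(3) unfolding e by (simp add: tmult_tr tlen_tr)
      then show ?thesis using ppos Z by (simp add: power_add field_simps)
    qed
    finally show ?thesis using True by simp
  next
    case False
    have "\<xi> \<notin> ?G ` (Lk R S a k \<times> ?V)"
      using False Lk_step_img1[OF Rrefl Rsym SS aS] by auto
    then show ?thesis using False unfolding eq by (simp add: pmf_map_pair_out[OF s1 s2])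
  qed
qed

end



context alg begin

lemma main:
  "card S = n \<Longrightarrow> S \<subseteq> \<Sigma> \<Longrightarrow> (\<forall>S'\<subseteq>S. 0 < mu R S' p) \<Longrightarrow>
   pmf (map_pmf fst (A1n n \<Sigma> R ch p cch ccall casg cmul g S T)) x =
   (if x \<in> Xs R S T then p ^ tlen x * mu R S p / mu R (S - T) p else 0)"
proof (induction n arbitrary: S T x)
  case 0
  have "finite S" using 0(2) fin finite_subset by blast
  then have "S = {}" using 0(1) by simp
  then show ?case using 0(3)
    by (auto simp: Xs_empty tunit_def pmf_return tlen_tr)
next
  case (Suc n)
  have finS: "finite S" using Suc(3) fin finite_subset by blast
  have pos: "\<And>S'. S' \<subseteq> S \<Longrightarrow> 0 < mu R S' p" using Suc(4) by blast
  show ?case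
  proof (cases "S \<inter> T = {}")
    case True
    have "S - T = S" using True by blast
    then show ?thesis using True pos[of S]
      by (auto simp: Xs_empty tunit_def pmf_return tlen_tr)
  next
    case False
    define a where "a = ch S T"
    have aST: "a \<in> S" "a \<in> T" using ch False a_def by auto
    define L1 where "L1 = Lset \<Sigma> R a"
    have aL1: "a \<in> L1" using aST Suc(3) Rrefl by (auto simp: L1_def Lset_def)
    define S' where "S' = S - {a}"
    have cS': "card S' = n" using Suc(2) aST finS by (simp add: S'_def)
    have S'S: "S' \<subseteq> \<Sigma>" using Suc(3) by (auto simp: S'_def)
    have posS': "\<forall>S''\<subseteq>S'. 0 < mu R S'' p" using pos by (auto simp: S'_def)
    define D1 where "D1 = A1n n \<Sigma> R ch p cch ccall casg cmul g S' L1"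
    define D2 where "D2 = A1n n \<Sigma> R ch p cch ccall casg cmul g S' T"
    define m where "m = mu R S p"
    define m' where "m' = mu R S' p"
    define mL where "mL = mu R (S - L1) p"
    define mT where "mT = mu R (S - T) p"
    have pm: "m > 0" "m' > 0" "mL > 0" "mT > 0"
      using pos by (auto simp: m_def m'_def mL_def mT_def S'_def)
    have e1: "S' - L1 = S - L1" using aL1 by (auto simp: S'_def)
    have e2: "S' - T = S - T" using aST by (auto simp: S'_def)
    have split: "m = m' - p * mL"
      unfolding m_def m'_def mL_def S'_def L1_def
      by (rule mu_split[OF Rrefl Rsym finS Suc(3) aST(1)])
    define r where "r = 1 - m / m'"
    have r: "r = p * (mL / m')" using split pm by (simp add: r_def field_simps)
    have rpos: "r > 0" using r pm ppos by simp
    have r1: "0 < 1 - r" "1 - r \<le> 1" using pm rpos by (auto simp: r_def)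
    have IH1: "\<And>v. pmf (map_pmf fst D1) v = (if v \<in> Xs R (S - {a}) (Lset \<Sigma> R a) then p ^ tlen v / (mL / m') else 0)"
    proof -
      fix v
      have "pmf (map_pmf fst D1) v = (if v \<in> Xs R S' L1 then p ^ tlen v * m' / mL else 0)"
        using Suc.IH[OF cS' S'S posS', of L1 v] unfolding D1_def e1 m'_def mL_def by simp
      then show "pmf (map_pmf fst D1) v = (if v \<in> Xs R (S - {a}) (Lset \<Sigma> R a) then p ^ tlen v / (mL / m') else 0)"
        by (simp add: S'_def L1_def)
    qed
    have IH2: "\<And>v. pmf (map_pmf fst D2) v = (if v \<in> Xs R S' T then p ^ tlen v * m' / mT else 0)"
      using Suc.IH[OF cS' S'S posS', of T]
      by (simp add: D2_def e2 m'_def mT_def)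
    have loop: "\<And>k \<xi>. pmf (map_pmf fst (loopA R ccall casg cmul D1 a k)) \<xi> =
        (if \<xi> \<in> Lk R S a k then p ^ tlen \<xi> / r ^ k else 0)"
      using loop_pmf[OF Suc(3) aST(1) _ IH1] pm r by simp
    let ?G = "\<lambda>(\<xi>, v). tmult R \<xi> v"
    define F where "F K = map_pmf ?G (pair_pmf (map_pmf fst (loopA R ccall casg cmul D1 a K)) (map_pmf fst D2))" for K
    have A0: "A1n (Suc n) \<Sigma> R ch p cch ccall casg cmul g S T = bind_pmf (geometric_pmf (1 - r))
       (\<lambda>K. bind_pmf (loopA R ccall casg cmul D1 a K) (\<lambda>(\<xi>, c). bind_pmf D2 (\<lambda>(v, c').
          return_pmf (tmult R \<xi> v, cch + cch + casg + g K + casg + c + ccall + c' + cmul + casg))))"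
      using False
      by (simp add: Let_def a_def[symmetric] r_def m_def m'_def S'_def L1_def D1_def D2_def)
    have A: "map_pmf fst (A1n (Suc n) \<Sigma> R ch p cch ccall casg cmul g S T) = bind_pmf (geometric_pmf (1 - r)) F"
      unfolding A0 F_def by (subst map_bind_pmf, simp only: map_fst_bind2)
    have s1: "\<And>K. set_pmf (map_pmf fst (loopA R ccall casg cmul D1 a K)) \<subseteq> Lk R S a K"
      by (rule set_pmf_sub[OF loop])
    have s2: "set_pmf (map_pmf fst D2) \<subseteq> Xs R S' T" by (rule set_pmf_sub[OF IH2])
    have img1: "\<And>K. ?G ` (Lk R S a K \<times> Xs R S' T) \<subseteq> Xs R S T"
      using Fin_img1[OF Rrefl Rsym Suc(3) aST(1) aST(2)] by (auto simp: S'_def)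
    show ?thesis
    proof (cases "x \<in> Xs R S T")
      case True
      then obtain k0 \<xi>0 v0 where d: "\<xi>0 \<in> Lk R S a k0" "v0 \<in> Xs R S' T" "x = tmult R \<xi>0 v0"
        using Fin_img2[OF Rrefl Rsym Suc(3) aST(1)] unfolding S'_def by metis
      have other: "pmf (F K) x = 0" if "K \<noteq> k0" for K
      proof -
        have "x \<notin> ?G ` (Lk R S a K \<times> Xs R S' T)"
        proof
          assume "x \<in> ?G ` (Lk R S a K \<times> Xs R S' T)"
          then obtain \<xi>1 v1 where "\<xi>1 \<in> Lk R S a K" "v1 \<in> Xs R S' T" "x = tmult R \<xi>1 v1" by auto
          then have "K = k0" using Fin_k[OF Rrefl Rsym Suc(3) aST(1)] d unfolding S'_def by metis
          then show False using that by simp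
        qed
        then show ?thesis unfolding F_def by (rule pmf_map_pair_out[OF s1 s2])
      qed
      have inj: "inj_on ?G (Lk R S a k0 \<times> Xs R S' T)"
        using Fin_inj[OF Rrefl Rsym Suc(3) aST(1)] unfolding S'_def .
      have Fk0: "pmf (F k0) x = (p ^ tlen \<xi>0 / r ^ k0) * (p ^ tlen v0 * m' / mT)"
        unfolding F_def d(3) using pmf_map_pair_in[OF inj s1 s2 d(1,2)] loop IH2 d by simp
      have tl: "tlen x = tlen \<xi>0 + tlen v0"
        using d by (simp add: tlen_tmult_range Lk_range Xs_range)
      have "pmf (bind_pmf (geometric_pmf (1 - r)) F) x = (\<integral>K. pmf (F K) x \<partial>measure_pmf (geometric_pmf (1 - r)))"
        by (rule pmf_bind)
      also have "\<dots> = (\<Sum>K\<in>{k0}. pmf (F K) x * pmf (geometric_pmf (1 - r)) K)"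
        using other by (intro integral_measure_pmf_real) auto
      also have "\<dots> = (p ^ tlen \<xi>0 / r ^ k0) * (p ^ tlen v0 * m' / mT) * (r ^ k0 * (1 - r))"
        using Fk0 r1 by (simp add: pmf_geometric)
      also have "\<dots> = p ^ tlen x * m / mT"
        using rpos pm tl by (simp add: r_def power_add field_simps)
      finally show ?thesis using A True by (simp add: m_def mT_def)
    next
      case False
      have "pmf (F K) x = 0" for K
        unfolding F_def using False img1 by (intro pmf_map_pair_out[OF s1 s2]) auto
      then have "pmf (bind_pmf (geometric_pmf (1 - r)) F) x = 0" by (simp add: pmf_bind)
      then show ?thesis using A False by simp
    qed
  qed
qed

end



lemma mu_empty[simp]: "mu R {} X = 1"
proof -
  have "{\<gamma>. is_clique R {} \<gamma>} = {{}}" by (auto simp: is_clique_def)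
  then show ?thesis by (simp add: mu_def)
qed

lemma Xs_self: "Xs R S S = traces R S"
proof (intro equalityI subsetI)
  fix x assume "x \<in> traces R S"
  then obtain w where w: "w \<in> lists S" "x = tr R w" by (auto simp: traces_def)
  have "\<forall>b. ismax R b w \<longrightarrow> b \<in> S" using w(1) by (auto simp: ismax_iff)
  then show "x \<in> Xs R S S" using w Xs_tr by metis
qed (auto simp: Xs_def)

lemma traces_mono: "S' \<subseteq> S \<Longrightarrow> traces R S' \<subseteq> traces R S"
  by (auto simp: traces_def intro: lists_mono[THEN subsetD])

context alg begin

lemma hasZ:
  assumes "S \<subseteq> \<Sigma>" "\<forall>S'\<subseteq>S. 0 < mu R S' p"
  shows "((\<lambda>x. p ^ tlen x) has_sum (mu R (S - T) p / mu R S p)) (Xs R S T)"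
proof -
  let ?M = "map_pmf fst (A1n (card S) \<Sigma> R ch p cch ccall casg cmul g S T)"
  have pm: "\<And>x. pmf ?M x = (if x \<in> Xs R S T then p ^ tlen x * mu R S p / mu R (S - T) p else 0)"
    using main[OF refl assms] .
  have c: "mu R S p > 0" "mu R (S - T) p > 0" using assms(2) by auto
  have "(pmf ?M has_sum 1) (Xs R S T)" by (rule has_sum_pmf[OF set_pmf_sub[OF pm]])
  then have "((\<lambda>x. (mu R S p / mu R (S - T) p) * p ^ tlen x) has_sum 1) (Xs R S T)"
    by (rule has_sum_cong[THEN iffD1, rotated]) (simp add: pm)
  then have "((\<lambda>x. p ^ tlen x) has_sum (1 / (mu R S p / mu R (S - T) p))) (Xs R S T)"
    using c by (subst (asm) has_sum_cmult_right_iff) auto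
  then show ?thesis by simp
qed

lemma Dpt_eq:
  assumes "S \<subseteq> \<Sigma>" "\<forall>S'\<subseteq>S. 0 < mu R S' p"
  shows "Dpt R S T p x = (if x \<in> Xs R S T then p ^ tlen x * mu R S p / mu R (S - T) p else 0)"
proof -
  have c: "mu R S p > 0" "mu R (S - T) p > 0" using assms(2) by auto
  have "((\<lambda>y. mu R S p * p ^ tlen y) has_sum (mu R S p * (mu R (S - T) p / mu R S p))) (Xs R S T)"
    by (rule has_sum_cmult_right[OF hasZ[OF assms]])
  then have inf: "infsum (Bw R S p) (Xs R S T) = mu R (S - T) p"
    using c by (simp add: Bw_def[abs_def] infsumI)
  have se: "{y \<in> traces R S. tmax R y \<subseteq> T} = Xs R S T" by (simp add: Xs_def)
  have "x \<in> traces R S \<and> tmax R x \<subseteq> T \<longleftrightarrow> x \<in> Xs R S T" by (simp add: Xs_def)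
  then show ?thesis unfolding Dpt_def se using inf by (simp add: Bw_def mult.commute)
qed

end

lemma loop_cost:
  assumes D1: "\<And>v c'. (v, c') \<in> set_pmf D1 \<Longrightarrow> v \<in> range (tr R) \<and> c' \<le> \<beta> * (tlen v + 1)"
  shows "(\<xi>, c) \<in> set_pmf (loopA R ccall casg cmul D1 a K) \<Longrightarrow>
     \<xi> \<in> range (tr R) \<and> K \<le> tlen \<xi> \<and> c \<le> K * (ccall + 2 * cmul + 2 * casg) + \<beta> * tlen \<xi>"
proof (induction K arbitrary: \<xi> c)
  case 0
  then show ?case by (auto simp: tunit_def tlen_tr)
next
  case (Suc K)
  from Suc.prems obtain \<xi>0 c0 v c' where
    h: "(\<xi>0, c0) \<in> set_pmf (loopA R ccall casg cmul D1 a K)" "(v, c') \<in> set_pmf D1"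
      "\<xi> = tmult R (tmult R \<xi>0 v) (tr R [a])" "c = c0 + ccall + c' + 2 * cmul + casg + casg"
    by auto
  have ih: "\<xi>0 \<in> range (tr R)" "K \<le> tlen \<xi>0" "c0 \<le> K * (ccall + 2 * cmul + 2 * casg) + \<beta> * tlen \<xi>0"
    using Suc.IH[OF h(1)] by auto
  have dv: "v \<in> range (tr R)" "c' \<le> \<beta> * (tlen v + 1)" using D1[OF h(2)] by auto
  obtain xw vw where e: "\<xi>0 = tr R xw" "v = tr R vw" using ih(1) dv(1) by auto
  have xi: "\<xi> = tr R (xw @ vw @ [a])" using h(3) e by (simp add: tmult_tr)
  have tl: "tlen \<xi> = tlen \<xi>0 + tlen v + 1" using xi e by (simp add: tlen_tr)
  have "c \<le> K * (ccall + 2 * cmul + 2 * casg) + \<beta> * tlen \<xi>0 + ccall + \<beta> * (tlen v + 1) + 2 * cmul + casg + casg"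
    using h(4) ih(3) dv(2) by linarith
  also have "\<dots> = Suc K * (ccall + 2 * cmul + 2 * casg) + \<beta> * tlen \<xi>"
    using tl by (simp add: algebra_simps)
  finally show ?case using xi ih(2) tl by auto
qed

lemma alg_cost:
  fixes crnd cch ccall casg cmul :: nat
  assumes g: "\<forall>k. g k \<le> crnd * (k + 1)"
  defines "\<alpha> \<equiv> 3 * cch + 5 * casg + 3 * ccall + 3 * cmul + crnd"
  shows "(\<xi>, c) \<in> set_pmf (A1n m \<Sigma> R ch p cch ccall casg cmul g S T) \<Longrightarrow>
     \<xi> \<in> range (tr R) \<and> c \<le> \<alpha> * (m + 1) * (tlen \<xi> + 1)"
proof (induction m arbitrary: S T \<xi> c)
  case 0
  then show ?case by (auto simp: tunit_def tlen_tr \<alpha>_def)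
next
  case (Suc m)
  show ?case
  proof (cases "S \<inter> T = {}")
    case True
    then show ?thesis using Suc.prems by (auto simp: tunit_def tlen_tr \<alpha>_def)
  next
    case False
    define a where "a = ch S T"
    define D1 where "D1 = A1n m \<Sigma> R ch p cch ccall casg cmul g (S - {a}) (Lset \<Sigma> R a)"
    define D2 where "D2 = A1n m \<Sigma> R ch p cch ccall casg cmul g (S - {a}) T"
    let ?r = "1 - mu R S p / mu R (S - {a}) p"
    have "(\<xi>, c) \<in> set_pmf (bind_pmf (geometric_pmf (1 - ?r)) (\<lambda>K.
          bind_pmf (loopA R ccall casg cmul D1 a K) (\<lambda>(\<xi>, c).
          bind_pmf D2 (\<lambda>(v, c').
          return_pmf (tmult R \<xi> v, cch + cch + casg + g K + casg + c + ccall + c' + cmul + casg)))))"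
      using Suc.prems False by (simp add: Let_def a_def D1_def D2_def)
    then obtain K \<xi>1 c1 v c' where
      h: "(\<xi>1, c1) \<in> set_pmf (loopA R ccall casg cmul D1 a K)" "(v, c') \<in> set_pmf D2"
      "\<xi> = tmult R \<xi>1 v" "c = cch + cch + casg + g K + casg + c1 + ccall + c' + cmul + casg"
      by auto
    let ?\<beta> = "\<alpha> * (m + 1)"
    have l: "\<xi>1 \<in> range (tr R)" "K \<le> tlen \<xi>1" "c1 \<le> K * (ccall + 2 * cmul + 2 * casg) + ?\<beta> * tlen \<xi>1"
      using loop_cost[of D1 R ?\<beta>, OF _ h(1)] Suc.IH unfolding D1_def by auto
    have d2: "v \<in> range (tr R)" "c' \<le> ?\<beta> * (tlen v + 1)" using Suc.IH h(2) unfolding D2_def by auto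
    obtain xw vw where e: "\<xi>1 = tr R xw" "v = tr R vw" using l(1) d2(1) by auto
    have xi: "\<xi> = tr R (xw @ vw)" using h(3) e by (simp add: tmult_tr)
    have tl: "tlen \<xi> = tlen \<xi>1 + tlen v" using xi e by (simp add: tlen_tr)
    define l0 where "l0 = tlen \<xi>"
    have Kl0: "K \<le> l0" using l(2) tl l0_def by simp
    have gK: "g K \<le> crnd * (K + 1)" using g by blast
    have c1: "c \<le> (2 * cch + 3 * casg + ccall + cmul) + crnd * (K + 1) + K * (ccall + 2 * cmul + 2 * casg)
          + (?\<beta> * tlen \<xi>1 + ?\<beta> * (tlen v + 1))"
      using h(4) gK l(3) d2(2) by linarith
    have c2: "?\<beta> * tlen \<xi>1 + ?\<beta> * (tlen v + 1) = ?\<beta> * (l0 + 1)"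
      using tl l0_def by (simp add: algebra_simps)
    have c3: "(2 * cch + 3 * casg + ccall + cmul) + crnd * (K + 1) + K * (ccall + 2 * cmul + 2 * casg)
        \<le> \<alpha> * (l0 + 1)"
    proof -
      have "(2 * cch + 3 * casg + ccall + cmul) + crnd * (K + 1) + K * (ccall + 2 * cmul + 2 * casg)
          = (2 * cch + 3 * casg + ccall + cmul + crnd) + K * (crnd + ccall + 2 * cmul + 2 * casg)"
        by (simp add: algebra_simps)
      also have "\<dots> \<le> \<alpha> + K * \<alpha>"
        by (intro add_mono mult_le_mono2) (auto simp: \<alpha>_def)
      also have "\<dots> = \<alpha> * (K + 1)" by (simp add: algebra_simps)
      also have "\<dots> \<le> \<alpha> * (l0 + 1)" using Kl0 by simp
      finally show ?thesis .
    qed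
    have "c \<le> \<alpha> * (l0 + 1) + ?\<beta> * (l0 + 1)" using c1 c2 c3 by linarith
    also have "\<dots> = \<alpha> * (Suc m + 1) * (tlen \<xi> + 1)" by (simp add: l0_def algebra_simps)
    finally show ?thesis using xi by simp
  qed
qed



lemma mu_isCont: "isCont (\<lambda>t::real. mu R S t) x"
  using mu_cont continuous_on_eq_continuous_at[OF open_UNIV] by blast

lemma mu_pos_interval:
  fixes p t :: real
  assumes fS: "finite S" and pS: "ereal p < pS R S" and t: "0 \<le> t" "t \<le> p"
  shows "0 < mu R S t"
proof -
  have noroot: "mu R S s \<noteq> 0" if s: "0 \<le> s" "s \<le> p" for s
  proof
    assume "mu R S s = 0"
    then have "mu R S (complex_of_real s) = 0" by (simp add: mu_of_real)
    then have "complex_of_real s \<in> {z. mu R S z = 0}" by simp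
    then have "pS R S \<le> ereal (cmod (complex_of_real s))"
      unfolding pS_def by (rule INF_lower)
    then have "pS R S \<le> ereal s" using s by simp
    moreover have "ereal s \<le> ereal p" using s by simp
    ultimately show False using pS by (meson leD order.trans)
  qed
  show ?thesis
  proof (rule ccontr)
    assume "\<not> 0 < mu R S t"
    then have "mu R S t \<le> 0" by simp
    moreover have "0 \<le> mu R S (0::real)" using mu_zero[OF fS, of R, where 'b=real] by simp
    ultimately have "\<exists>x. 0 \<le> x \<and> x \<le> t \<and> mu R S x = 0"
      using t by (intro IVT2[where f = "\<lambda>t. mu R S t"]) (auto intro: mu_isCont)
    then show False using noroot t by force
  qed
qed

lemma subsets_pos:
  fixes p :: real and \<Sigma> :: "'a set" and ch :: "'a set \<Rightarrow> 'a set \<Rightarrow> 'a"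
  assumes fin: "finite \<Sigma>" and Rrefl: "\<forall>a\<in>\<Sigma>. R a a" and Rsym: "\<forall>a\<in>\<Sigma>. \<forall>b\<in>\<Sigma>. R a b \<longrightarrow> R b a"
    and ch: "\<forall>X Y. X \<inter> Y \<noteq> {} \<longrightarrow> ch X Y \<in> X \<inter> Y" and SS: "S \<subseteq> \<Sigma>" and p: "0 < p"
    and posS: "\<And>t. 0 \<le> t \<Longrightarrow> t \<le> p \<Longrightarrow> 0 < mu R S t"
  shows "\<forall>S'\<subseteq>S. 0 < mu R S' p"
proof (rule ccontr)
  assume "\<not> (\<forall>S'\<subseteq>S. 0 < mu R S' p)"
  then obtain S1 where S1': "S1 \<subseteq> S" "\<not> 0 < mu R S1 p" by blast
  then have S1: "S1 \<subseteq> S" "mu R S1 p \<le> 0" by auto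
  have finS: "finite S" using SS fin finite_subset by blast
  define Z where "Z = {s \<in> {0..p}. \<exists>S'\<in>Pow S. mu R S' s \<le> 0}"
  have Zeq: "Z = {0..p} \<inter> (\<Union>S'\<in>Pow S. {s. mu R S' s \<le> 0})" by (auto simp: Z_def)
  have cl: "closed Z" unfolding Zeq
    by (intro closed_Int closed_atLeastAtMost closed_UN finite_Pow_iff[THEN iffD2, OF finS] ballI
        closed_Collect_le[OF mu_cont continuous_on_const])
  have pZ: "p \<in> Z" using S1 p by (auto simp: Z_def)
  have bdd: "bdd_below Z" by (auto simp: Z_def bdd_below_def)
  define t0 where "t0 = Inf Z"
  have t0Z: "t0 \<in> Z" unfolding t0_def by (rule closed_contains_Inf) (use pZ bdd cl in auto)
  then obtain S0 where S0: "S0 \<subseteq> S" "mu R S0 t0 \<le> 0" and t0: "0 \<le> t0" "t0 \<le> p"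
    by (auto simp: Z_def)
  have finS0: "finite S0" using S0 finS finite_subset by blast
  have "t0 \<noteq> 0" using S0 mu_zero[OF finS0, of R, where 'b=real] by auto
  then have t0pos: "0 < t0" using t0 by simp
  have below: "mu R S s \<le> mu R S0 s" if s: "s \<in> {0<..<t0}" for s
  proof -
    have "s \<notin> Z"
    proof
      assume "s \<in> Z"
      then have "t0 \<le> s" unfolding t0_def using bdd by (rule cInf_lower)
      then show False using s by simp
    qed
    then have allpos: "\<forall>S'\<subseteq>S. 0 < mu R S' s" using s t0 by (auto simp: Z_def not_le)
    interpret A: alg \<Sigma> R ch s 0 0 0 0 "\<lambda>_. 0"
      using fin Rrefl Rsym ch s by unfold_locales auto
    have h0: "((\<lambda>x. s ^ tlen x) has_sum (1 / mu R S0 s)) (traces R S0)"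
      using A.hasZ[of S0 S0] S0 SS allpos by (simp add: Xs_self)
    have h1: "((\<lambda>x. s ^ tlen x) has_sum (1 / mu R S s)) (traces R S)"
      using A.hasZ[of S S] SS allpos by (simp add: Xs_self)
    have "1 / mu R S0 s \<le> 1 / mu R S s"
    proof -
      have "traces R S0 \<subseteq> traces R S" by (rule traces_mono[OF S0(1)])
      then show ?thesis by (intro has_sum_mono_neutral[OF h0 h1]) (use s in auto)
    qed
    moreover have "0 < mu R S0 s" "0 < mu R S s" using allpos S0 by auto
    ultimately show ?thesis using inverse_le_iff_le[of "mu R S0 s" "mu R S s"] by (simp add: inverse_eq_divide)
  qed
  have "closure {0<..<t0} \<subseteq> {s. mu R S s \<le> mu R S0 s}"
    using below by (intro closure_minimal closed_Collect_le mu_cont) auto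
  then have "{0..t0} \<subseteq> {s. mu R S s \<le> mu R S0 s}" using t0pos by simp
  moreover have "t0 \<in> {0..t0}" using t0pos by simp
  ultimately have "t0 \<in> {s. mu R S s \<le> mu R S0 s}" by blast
  then have "mu R S t0 \<le> 0" using S0 by simp
  moreover have "0 < mu R S t0" using posS t0 by simp
  ultimately show False by simp
qed



theorem theorem2p1:
  fixes cch ccall casg cmul crnd :: nat
  shows "\<exists>C::nat. \<forall>(\<Sigma>::'a set) R ch g S T (p::real).
     finite \<Sigma> \<and> (\<forall>a\<in>\<Sigma>. R a a) \<and> (\<forall>a\<in>\<Sigma>. \<forall>b\<in>\<Sigma>. R a b \<longrightarrow> R b a) \<and>
     S \<subseteq> \<Sigma> \<and> T \<subseteq> \<Sigma> \<and> 0 < p \<and> ereal p < pS R S \<and>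
     (\<forall>X Y. X \<inter> Y \<noteq> {} \<longrightarrow> ch X Y \<in> X \<inter> Y) \<and>
     (\<forall>k. g k \<le> crnd * (k + 1))
     \<longrightarrow>
     (\<forall>x. pmf (map_pmf fst (A1 \<Sigma> R ch p cch ccall casg cmul g S T)) x = Dpt R S T p x) \<and>
     (\<forall>\<xi> n. (\<xi>, n) \<in> set_pmf (A1 \<Sigma> R ch p cch ccall casg cmul g S T)
        \<longrightarrow> n \<le> C * (card \<Sigma> + 1) * (tlen \<xi> + 1))"
proof (rule exI[where x = "3 * cch + 5 * casg + 3 * ccall + 3 * cmul + crnd"], intro allI impI conjI)
  fix \<Sigma> :: "'a set" and R :: "'a \<Rightarrow> 'a \<Rightarrow> bool" and ch :: "'a set \<Rightarrow> 'a set \<Rightarrow> 'a"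
    and g :: "nat \<Rightarrow> nat" and S T :: "'a set" and p :: real
  assume h: "finite \<Sigma> \<and> (\<forall>a\<in>\<Sigma>. R a a) \<and> (\<forall>a\<in>\<Sigma>. \<forall>b\<in>\<Sigma>. R a b \<longrightarrow> R b a) \<and>
     S \<subseteq> \<Sigma> \<and> T \<subseteq> \<Sigma> \<and> 0 < p \<and> ereal p < pS R S \<and>
     (\<forall>X Y. X \<inter> Y \<noteq> {} \<longrightarrow> ch X Y \<in> X \<inter> Y) \<and>
     (\<forall>k. g k \<le> crnd * (k + 1))"
  then have fin: "finite \<Sigma>" and Rrefl: "\<forall>a\<in>\<Sigma>. R a a" and Rsym: "\<forall>a\<in>\<Sigma>. \<forall>b\<in>\<Sigma>. R a b \<longrightarrow> R b a"
    and SS: "S \<subseteq> \<Sigma>" and p: "0 < p" and pS: "ereal p < pS R S"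
    and ch: "\<forall>X Y. X \<inter> Y \<noteq> {} \<longrightarrow> ch X Y \<in> X \<inter> Y" and g: "\<forall>k. g k \<le> crnd * (k + 1)"
    by auto
  have finS: "finite S" using SS fin finite_subset by blast
  interpret A: alg \<Sigma> R ch p cch ccall casg cmul g
    using fin Rrefl Rsym ch p by unfold_locales auto
  have pos: "\<forall>S'\<subseteq>S. 0 < mu R S' p"
    using subsets_pos[OF fin Rrefl Rsym ch SS p] mu_pos_interval[OF finS pS] by blast
  fix x
  show "pmf (map_pmf fst (A1 \<Sigma> R ch p cch ccall casg cmul g S T)) x = Dpt R S T p x"
    unfolding A1_def A.main[OF refl SS pos] A.Dpt_eq[OF SS pos] ..
next
  fix \<Sigma> :: "'a set" and R :: "'a \<Rightarrow> 'a \<Rightarrow> bool" and ch :: "'a set \<Rightarrow> 'a set \<Rightarrow> 'a"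
    and g :: "nat \<Rightarrow> nat" and S T :: "'a set" and p :: real and \<xi> n
  assume h: "finite \<Sigma> \<and> (\<forall>a\<in>\<Sigma>. R a a) \<and> (\<forall>a\<in>\<Sigma>. \<forall>b\<in>\<Sigma>. R a b \<longrightarrow> R b a) \<and>
     S \<subseteq> \<Sigma> \<and> T \<subseteq> \<Sigma> \<and> 0 < p \<and> ereal p < pS R S \<and>
     (\<forall>X Y. X \<inter> Y \<noteq> {} \<longrightarrow> ch X Y \<in> X \<inter> Y) \<and>
     (\<forall>k. g k \<le> crnd * (k + 1))"
    and m: "(\<xi>, n) \<in> set_pmf (A1 \<Sigma> R ch p cch ccall casg cmul g S T)"
  then have fin: "finite \<Sigma>" and SS: "S \<subseteq> \<Sigma>" and g: "\<forall>k. g k \<le> crnd * (k + 1)" by auto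
  have "n \<le> (3 * cch + 5 * casg + 3 * ccall + 3 * cmul + crnd) * (card S + 1) * (tlen \<xi> + 1)"
  proof -
    have "(\<xi>, n) \<in> set_pmf (A1n (card S) \<Sigma> R ch p cch ccall casg cmul g S T)" using m by (simp add: A1_def)
    from alg_cost[OF g this] show ?thesis by simp
  qed
  also have "\<dots> \<le> (3 * cch + 5 * casg + 3 * ccall + 3 * cmul + crnd) * (card \<Sigma> + 1) * (tlen \<xi> + 1)"
    using card_mono[OF fin SS] by (intro mult_le_mono1 mult_le_mono2) simp
  finally show "n \<le> (3 * cch + 5 * casg + 3 * ccall + 3 * cmul + crnd) * (card \<Sigma> + 1) * (tlen \<xi> + 1)" .
qed

end
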